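(* Let $a_1\in D$ be a pure quaternion with $N(a_1)\in -u\mathbb{Q}_2^{*2}$, where $u$ is a unit of non-minimal quadratic defect (i.e. $u\in-\mathbb{Z}_2^{*2}\cup-5\mathbb{Z}_2^{*2}$), and let $t\in\{3,4\}$. Say that $r\in\mathcal{O}_D$ satisfies the $k$-star conditions if $\left(\frac{N(1-r),\,-N(a_1)}{2}\right)=-1$, $N(z)N(a_1)\in\mathbb{Q}_2^{*2}$ and $N(z)N(2^ta_1)^{-1}\in\mathbb{Z}_2$, where $z=a_1-ra_1\bar r$. Then there exists $r\in\mathcal{O}_D$ satisfying the $k$-star conditions if and only if there exists $\alpha=a+b\omega+ci+di\omega$ with $a,b,c,d\in\mathbb{Z}$, $0\le a,b,c,d<2^{t+3}$, satisfying them.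
   Context: $D=\left(\frac{2,5}{\mathbb{Q}_2}\right)$ is the quaternion division algebra over $\mathbb{Q}_2$ with basis $1,i,j,ij$, $i^2=2$, $j^2=5$, $ij=-ji$; $\omega=(1+j)/2$; $q\mapsto\bar q$ is the canonical involution and $N$ the reduced norm; $\mathcal{O}_D=\mathbb{Z}_2\oplus\mathbb{Z}_2\omega\oplus\mathbb{Z}_2i\oplus\mathbb{Z}_2i\omega$ is the maximal order. $\left(\frac{x,y}{2}\right)$ is the Hilbert symbol of $\mathbb{Q}_2$. *)

theory Defs
  imports "HOL-Computational_Algebra.Formal_Laurent_Series"
begin

text \<open>We model Q_2 as the quotient ring Z((X)) / (X - 2) of integer Laurent series
  modulo the principal ideal generated by X - 2.  (Z[[X]]/(X-2) is Z_2 and inverting X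
  gives Q_2 = Z_2[1/2].)  Z_2 is the image of the power series with nonnegative
  subdegree.\<close>

definition q2_rel :: "int fls \<Rightarrow> int fls \<Rightarrow> bool" where
  "q2_rel f g \<longleftrightarrow> (fls_X - 2) dvd (f - g)"

lemma q2_rel_equivp: "equivp q2_rel"
proof (rule equivpI)
  show "reflp q2_rel" by (rule reflpI) (simp add: q2_rel_def)
  show "symp q2_rel"
  proof (rule sympI)
    fix f g assume "q2_rel f g"
    then have "(fls_X - 2) dvd (-(f - g))" unfolding q2_rel_def by (simp only: dvd_minus_iff)
    then show "q2_rel g f" unfolding q2_rel_def by simp
  qed
  show "transp q2_rel"
  proof (rule transpI)
    fix f g h assume "q2_rel f g" "q2_rel g h"
    then have "(fls_X - 2) dvd ((f - g) + (g - h))" unfolding q2_rel_def by (rule dvd_add)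
    then show "q2_rel f h" unfolding q2_rel_def by simp
  qed
qed

quotient_type q2 = "int fls" / q2_rel
  by (rule q2_rel_equivp)

instantiation q2 :: comm_ring_1
begin

lift_definition zero_q2 :: q2 is "0 :: int fls" .
lift_definition one_q2 :: q2 is "1 :: int fls" .

lift_definition plus_q2 :: "q2 \<Rightarrow> q2 \<Rightarrow> q2" is "(+)"
proof -
  fix a b c d :: "int fls"
  assume "q2_rel a b" "q2_rel c d"
  then have "(fls_X - 2) dvd ((a - b) + (c - d))" unfolding q2_rel_def by (rule dvd_add)
  then show "q2_rel (a + c) (b + d)" unfolding q2_rel_def by (simp add: algebra_simps)
qed

lift_definition uminus_q2 :: "q2 \<Rightarrow> q2" is uminus
proof -
  fix a b :: "int fls"
  assume "q2_rel a b"
  then have "(fls_X - 2) dvd (-(a - b))" unfolding q2_rel_def by (simp only: dvd_minus_iff)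
  then show "q2_rel (- a) (- b)" unfolding q2_rel_def by (simp add: algebra_simps)
qed

lift_definition minus_q2 :: "q2 \<Rightarrow> q2 \<Rightarrow> q2" is "(-)"
proof -
  fix a b c d :: "int fls"
  assume "q2_rel a b" "q2_rel c d"
  then have "(fls_X - 2) dvd ((a - b) - (c - d))" unfolding q2_rel_def by (rule dvd_diff)
  then show "q2_rel (a - c) (b - d)" unfolding q2_rel_def by (simp add: algebra_simps)
qed

lift_definition times_q2 :: "q2 \<Rightarrow> q2 \<Rightarrow> q2" is "(*)"
proof -
  fix a b c d :: "int fls"
  assume ab: "q2_rel a b" and cd: "q2_rel c d"
  have "(fls_X - 2) dvd (a * (c - d) + (a - b) * d)"
    using ab cd unfolding q2_rel_def by (intro dvd_add dvd_mult dvd_mult2)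
  then show "q2_rel (a * c) (b * d)" unfolding q2_rel_def by (simp add: algebra_simps)
qed

instance
proof
  fix a b c :: q2
  show "a * b * c = a * (b * c)" by transfer (simp add: algebra_simps q2_rel_def)
  show "a * b = b * a" by transfer (simp add: algebra_simps q2_rel_def)
  show "1 * a = a" by transfer (simp add: algebra_simps q2_rel_def)
  show "a + b + c = a + (b + c)" by transfer (simp add: algebra_simps q2_rel_def)
  show "a + b = b + a" by transfer (simp add: algebra_simps q2_rel_def)
  show "0 + a = a" by transfer (simp add: algebra_simps q2_rel_def)
  show "- a + a = 0" by transfer (simp add: algebra_simps q2_rel_def)
  show "a - b = a + - b" by transfer (simp add: algebra_simps q2_rel_def)
  show "(a + b) * c = a * c + b * c" by transfer (simp add: algebra_simps q2_rel_def)
  show "(0::q2) \<noteq> 1"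
  proof transfer
    show "\<not> q2_rel 0 1"
    proof
      assume "q2_rel 0 1"
      then obtain g :: "int fls" where g: "1 = (fls_X - 2) * g"
        unfolding q2_rel_def by (auto elim: dvdE)
      then have "g \<noteq> 0" by auto
      define m where "m = fls_subdegree g"
      have "fls_nth ((fls_X - 2) * g) m = fls_nth g (m - 1) - 2 * fls_nth g m"
        using fls_mult_of_int_nth(1)[of 2 g m]
        by (simp add: algebra_simps fls_X_times_conv_shift)
      also have "fls_nth g (m - 1) = 0" unfolding m_def by simp
      finally have eq: "fls_nth (1::int fls) m = - 2 * fls_nth g m" using g by simp
      have nz: "fls_nth g m \<noteq> 0" unfolding m_def using \<open>g \<noteq> 0\<close> by simp
      show False
      proof (cases "m = 0")
        case True
        then have "(1::int) = - 2 * fls_nth g m" using eq by simp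
        then have "(2::int) dvd 1" by (metis dvd_triv_left minus_mult_commute)
        then show False by simp
      next
        case False
        then show False using eq nz by simp
      qed
    qed
  qed
qed

end

definition Z2 :: "q2 set" where
  "Z2 = abs_q2 ` {f. 0 \<le> fls_subdegree f}"

definition Z2_units :: "q2 set" where
  "Z2_units = {x \<in> Z2. \<exists>y \<in> Z2. x * y = 1}"

definition Q2_sq :: "q2 set" where
  "Q2_sq = {y * y | y. y \<noteq> 0}"

definition Z2_sq :: "q2 set" where
  "Z2_sq = {y * y | y. y \<in> Z2_units}"

definition q2_inv :: "q2 \<Rightarrow> q2" where
  "q2_inv x = (SOME y. x * y = 1)"

text \<open>Hilbert symbol of Q_2 (for nonzero arguments).\<close>

definition hilbert2 :: "q2 \<Rightarrow> q2 \<Rightarrow> int" where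
  "hilbert2 x y =
     (if \<exists>X Y Z. (X, Y, Z) \<noteq> (0, 0, 0) \<and> x * X^2 + y * Y^2 = Z^2 then 1 else -1)"

text \<open>Quat x0 x1 x2 x3 = x0 + x1 i + x2 j + x3 ij.\<close>

datatype quat = Quat q2 q2 q2 q2

fun qadd :: "quat \<Rightarrow> quat \<Rightarrow> quat" where
  "qadd (Quat x0 x1 x2 x3) (Quat y0 y1 y2 y3) = Quat (x0 + y0) (x1 + y1) (x2 + y2) (x3 + y3)"

fun qsub :: "quat \<Rightarrow> quat \<Rightarrow> quat" where
  "qsub (Quat x0 x1 x2 x3) (Quat y0 y1 y2 y3) = Quat (x0 - y0) (x1 - y1) (x2 - y2) (x3 - y3)"

fun qscale :: "q2 \<Rightarrow> quat \<Rightarrow> quat" where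
  "qscale c (Quat x0 x1 x2 x3) = Quat (c * x0) (c * x1) (c * x2) (c * x3)"

text \<open>Multiplication with i^2 = 2, j^2 = 5, ij = -ji.\<close>

fun qmul :: "quat \<Rightarrow> quat \<Rightarrow> quat" where
  "qmul (Quat x0 x1 x2 x3) (Quat y0 y1 y2 y3) =
     Quat (x0*y0 + 2*x1*y1 + 5*x2*y2 - 10*x3*y3)
          (x0*y1 + x1*y0 - 5*x2*y3 + 5*x3*y2)
          (x0*y2 + x2*y0 + 2*x1*y3 - 2*x3*y1)
          (x0*y3 + x3*y0 + x1*y2 - x2*y1)"

fun qconj :: "quat \<Rightarrow> quat" where
  "qconj (Quat x0 x1 x2 x3) = Quat x0 (- x1) (- x2) (- x3)"

text \<open>Reduced norm N(q) = q * conj q.\<close>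

fun qnorm :: "quat \<Rightarrow> q2" where
  "qnorm (Quat x0 x1 x2 x3) = x0^2 - 2*x1^2 - 5*x2^2 + 10*x3^2"

fun pure :: "quat \<Rightarrow> bool" where
  "pure (Quat x0 x1 x2 x3) \<longleftrightarrow> x0 = 0"

definition q_one :: quat where "q_one = Quat 1 0 0 0"
definition q_i :: quat where "q_i = Quat 0 1 0 0"
definition q_omega :: quat where "q_omega = Quat (q2_inv 2) 0 (q2_inv 2) 0"

definition OD_elem :: "q2 \<Rightarrow> q2 \<Rightarrow> q2 \<Rightarrow> q2 \<Rightarrow> quat" where
  "OD_elem a b c d =
     qadd (qadd (qscale a q_one) (qscale b q_omega))
          (qadd (qscale c q_i) (qscale d (qmul q_i q_omega)))"

definition O_D :: "quat set" where
  "O_D = {OD_elem a b c d | a b c d. a \<in> Z2 \<and> b \<in> Z2 \<and> c \<in> Z2 \<and> d \<in> Z2}"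

definition star_conditions :: "quat \<Rightarrow> nat \<Rightarrow> quat \<Rightarrow> bool" where
  "star_conditions a1 t r \<longleftrightarrow>
     (let z = qsub a1 (qmul (qmul r a1) (qconj r)) in
        hilbert2 (qnorm (qsub q_one r)) (- qnorm a1) = -1 \<and>
        qnorm z * qnorm a1 \<in> Q2_sq \<and>
        qnorm z * q2_inv (qnorm (qscale (2 ^ t) a1)) \<in> Z2)"

end

theory Submission
  imports Defs
begin

function ycf :: "int fps \<Rightarrow> int \<Rightarrow> int fps \<Rightarrow> nat \<Rightarrow> int" where
  "ycf K c E n = E$n - (if n = 0 then 0 else
      (\<Sum>i<n. ycf K c E i * (K$(n-1-i) + c * ycf K c E (n-1-i))))"
  by pat_completeness auto
termination by (relation "measure (\<lambda>(K,c,E,n). n)") auto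

declare ycf.simps[simp del]

lemma ycf_eq: "Abs_fps (ycf K c E) + fps_X * (Abs_fps (ycf K c E) * K + fps_const c * (Abs_fps (ycf K c E) * Abs_fps (ycf K c E))) = E"
proof (rule fps_ext)
  fix n
  define Y where "Y = Abs_fps (ycf K c E)"
  show "(Abs_fps (ycf K c E) + fps_X * (Abs_fps (ycf K c E) * K + fps_const c * (Abs_fps (ycf K c E) * Abs_fps (ycf K c E)))) $ n = E $ n"
  proof (cases n)
    case 0 then show ?thesis by (simp add: ycf.simps[of K c E 0])
  next
    case (Suc m)
    have "(Y * K + fps_const c * (Y * Y)) $ m
        = (\<Sum>i=0..m. Y$i * K$(m-i)) + c * (\<Sum>i=0..m. Y$i * Y$(m-i))"
      by (simp only: fps_add_nth fps_mult_left_const_nth) (simp add: fps_mult_nth)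
    also have "\<dots> = (\<Sum>i<Suc m. ycf K c E i * (K$(Suc m-1-i) + c * ycf K c E (Suc m-1-i)))"
      by (simp add: Y_def atLeast0AtMost lessThan_Suc_atMost algebra_simps sum.distrib sum_distrib_left)
    finally show ?thesis using Suc by (simp add: ycf.simps[of K c E "Suc m"] Y_def)
  qed
qed

definition emb :: "int fps \<Rightarrow> q2" where "emb F = abs_q2 (fps_to_fls F)"

lemma emb_add: "emb (F + G) = emb F + emb G" by (simp add: emb_def plus_q2.abs_eq)
lemma emb_mult: "emb (F * G) = emb F * emb G" by (simp add: emb_def times_q2.abs_eq fls_times_fps_to_fls)
lemma emb_diff: "emb (F - G) = emb F - emb G" by (simp add: emb_def minus_q2.abs_eq)
lemma emb_uminus: "emb (- F) = - emb F" by (simp add: emb_def uminus_q2.abs_eq)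
lemma emb_1: "emb 1 = 1" by (simp add: emb_def one_q2.abs_eq)
lemma emb_0: "emb 0 = 0" by (simp add: emb_def zero_q2.abs_eq)

lemma abs_q2_2: "abs_q2 2 = 2"
proof -
  have "abs_q2 2 = abs_q2 (1 + 1)" by simp
  also have "\<dots> = 1 + 1" by (simp only: plus_q2.abs_eq[symmetric] one_q2.abs_eq)
  finally show ?thesis by simp
qed

lemma emb_X: "emb fps_X = 2"
proof -
  have "abs_q2 fls_X = abs_q2 2" by (simp add: q2.abs_eq_iff q2_rel_def)
  then show ?thesis by (simp add: emb_def abs_q2_2)
qed

lemma emb_of_nat: "emb (of_nat n) = of_nat n"
  by (induction n) (simp_all add: emb_0 emb_add emb_1)

lemma emb_of_int: "emb (of_int m) = of_int m"
proof (cases m rule: int_cases)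
  case (nonneg n) then show ?thesis using emb_of_nat[of n] by simp
next
  case (neg n) then show ?thesis using emb_of_nat[of "Suc n"] by (simp add: emb_uminus del: of_nat_Suc)
qed

lemma emb_const: "emb (fps_const m) = of_int m"
proof -
  have "fps_const m = (of_int m :: int fps)" by (metis fps_of_int of_int_eq_id id_apply)
  then show ?thesis using emb_of_int[of m] by simp
qed

lemma emb_power: "emb (F ^ n) = emb F ^ n"
  by (induction n) (simp_all add: emb_1 emb_mult)

lemma Z2_emb: "x \<in> Z2 \<longleftrightarrow> (\<exists>F. x = emb F)"
proof
  assume "x \<in> Z2"
  then obtain f where f: "x = abs_q2 f" "0 \<le> fls_subdegree f" by (auto simp: Z2_def)
  then have "x = emb (fls_regpart f)" by (simp add: emb_def)
  then show "\<exists>F. x = emb F" ..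
next
  assume "\<exists>F. x = emb F"
  then obtain F where "x = emb F" by blast
  then show "x \<in> Z2" unfolding Z2_def emb_def using fls_subdegree_fls_to_fps_gt0[of F] by blast
qed

lemma emb_Z2[simp]: "emb F \<in> Z2" using Z2_emb by blast

lemma Z2_add[simp]: "x \<in> Z2 \<Longrightarrow> y \<in> Z2 \<Longrightarrow> x + y \<in> Z2"
  by (auto simp: Z2_emb emb_add[symmetric])
lemma Z2_mult[simp]: "x \<in> Z2 \<Longrightarrow> y \<in> Z2 \<Longrightarrow> x * y \<in> Z2"
  by (auto simp: Z2_emb emb_mult[symmetric])
lemma Z2_diff[simp]: "x \<in> Z2 \<Longrightarrow> y \<in> Z2 \<Longrightarrow> x - y \<in> Z2"
  by (auto simp: Z2_emb emb_diff[symmetric])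
lemma Z2_uminus[simp]: "x \<in> Z2 \<Longrightarrow> - x \<in> Z2"
  by (auto simp: Z2_emb emb_uminus[symmetric])
lemma Z2_of_int[simp]: "of_int m \<in> Z2"
  by (metis emb_Z2 emb_of_int)
lemma Z2_1[simp]: "1 \<in> Z2" using Z2_of_int[of 1] by simp
lemma Z2_0[simp]: "0 \<in> Z2" using Z2_of_int[of 0] by simp
lemma Z2_numeral[simp]: "numeral k \<in> Z2" using Z2_of_int[of "numeral k"] by simp
lemma Z2_power[simp]: "x \<in> Z2 \<Longrightarrow> x ^ n \<in> Z2" by (induction n) simp_all

fun S :: "nat \<Rightarrow> int fps \<Rightarrow> int" where
  "S 0 F = 0"
| "S (Suc n) F = F$0 + 2 * S n (fps_shift 1 F)"

lemma fps_split1: "(F::int fps) = fps_const (F$0) + fps_X * fps_shift 1 F"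
proof (rule fps_ext)
  fix n show "F $ n = (fps_const (F$0) + fps_X * fps_shift 1 F) $ n"
    by (cases n) simp_all
qed

lemma emb_split1: "emb F = of_int (F$0) + 2 * emb (fps_shift 1 F)"
  by (subst fps_split1) (simp add: emb_add emb_mult emb_const emb_X)

lemma emb_split: "emb F = of_int (S n F) + 2^n * emb (fps_shift n F)"
proof (induction n arbitrary: F)
  case 0 then show ?case by simp
next
  case (Suc n)
  have sh: "fps_shift n (fps_shift (Suc 0) F) = fps_shift (Suc n) F" by (rule fps_ext) simp
  show ?case
    using emb_split1[of F] Suc[of "fps_shift 1 F"] by (simp add: sh algebra_simps)
qed

lemma S_Suc': "S (Suc n) F = S n F + F$n * 2^n"
proof (induction n arbitrary: F)
  case 0 then show ?case by simp
next
  case (Suc n)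
  show ?case using Suc[of "fps_shift 1 F"] by (simp add: algebra_simps)
qed

lemma emb0_even:
  assumes "emb F = 0" shows "even (F$0)"
proof -
  from assms have "q2_rel (fps_to_fls F) 0"
    by (simp add: emb_def q2.abs_eq_iff[symmetric] zero_q2.abs_eq)
  then obtain h :: "int fls" where h: "fps_to_fls F = (fls_X - 2) * h"
    unfolding q2_rel_def by (auto elim: dvdE)
  have coef: "fls_nth ((fls_X - 2) * h) m = fls_nth h (m - 1) - 2 * fls_nth h m" for m
    using fls_mult_of_int_nth(1)[of 2 h m]
    by (simp add: algebra_simps fls_X_times_conv_shift)
  have hm1: "fls_nth h (-1) = 0"
  proof (rule ccontr)
    assume nz: "fls_nth h (-1) \<noteq> 0"
    then have "h \<noteq> 0" by auto
    define m where "m = fls_subdegree h"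
    have "m \<le> -1" unfolding m_def using nz by (meson fls_subdegree_leI)
    have "fls_nth (fps_to_fls F) m = 0" using \<open>m \<le> -1\<close> by simp
    moreover have "fls_nth h (m - 1) = 0" unfolding m_def by simp
    moreover have "fls_nth h m \<noteq> 0" unfolding m_def using \<open>h \<noteq> 0\<close> by simp
    ultimately show False using coef[of m] h by simp
  qed
  have "F$0 = fls_nth (fps_to_fls F) 0" by simp
  also have "\<dots> = - 2 * fls_nth h 0" using coef[of 0] h hm1 by simp
  finally show ?thesis by simp
qed

definition half :: q2 where "half = abs_q2 fls_X_inv"

lemma half_2: "half * 2 = 1"
proof -
  have "half * 2 = abs_q2 fls_X_inv * abs_q2 fls_X"
    using emb_X by (simp add: half_def emb_def)
  also have "\<dots> = abs_q2 (fls_X_inv * fls_X)" by (simp add: times_q2.abs_eq)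
  also have "\<dots> = 1" by (simp add: one_q2.abs_eq fls_X_inv_times_conv_shift fls_X_conv_shift_1)
  finally show ?thesis .
qed

lemma cancel2: "2 * a = 2 * (b::q2) \<Longrightarrow> a = b"
  by (metis half_2 mult.assoc mult_1 mult.commute)

lemma two_pow_cancel: "2^n * a = 2^n * (b::q2) \<Longrightarrow> a = b"
  by (induction n) (auto simp: mult.assoc dest: cancel2)

definition dv :: "nat \<Rightarrow> q2 \<Rightarrow> bool" where "dv n x \<longleftrightarrow> (\<exists>y\<in>Z2. x = 2^n * y)"

lemma int_dv: "dv n (of_int m) \<Longrightarrow> 2^n dvd m"
proof (induction n arbitrary: m)
  case 0 then show ?case by simp
next
  case (Suc n)
  then obtain y where y: "y \<in> Z2" "of_int m = 2^Suc n * y" by (auto simp: dv_def)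
  then obtain G where G: "2^n * y = emb G" using Z2_emb[of "2^n*y"] by auto
  have "emb (fps_const m - fps_X * G) = 0"
    using y G by (simp add: emb_diff emb_mult emb_const emb_X mult.assoc)
  from emb0_even[OF this] have "even m" by simp
  then obtain m' where m': "m = 2 * m'" by blast
  have "2 * of_int m' = 2 * (2^n * y :: q2)" using y m' by (simp add: mult.assoc)
  then have "of_int m' = 2^n * y" by (rule cancel2)
  then have "dv n (of_int m')" using y by (auto simp: dv_def)
  from Suc.IH[OF this] show ?case using m' by simp
qed

lemma dv_intI: "2^n dvd m \<Longrightarrow> dv n (of_int m)"
  by (auto simp: dv_def elim!: dvdE intro!: bexI[of _ "of_int _"])

lemma dv_Z2: "dv n x \<Longrightarrow> x \<in> Z2" by (auto simp: dv_def)
lemma dv_0[simp]: "dv n 0" by (auto simp: dv_def intro!: bexI[of _ 0])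
lemma dv_zero_iff: "dv 0 x \<longleftrightarrow> x \<in> Z2" by (auto simp: dv_def)
lemma dv_add: "dv n x \<Longrightarrow> dv n y \<Longrightarrow> dv n (x + y)"
  by (auto simp: dv_def distrib_left intro!: bexI[of _ "_ + _"])
lemma dv_diff: "dv n x \<Longrightarrow> dv n y \<Longrightarrow> dv n (x - y)"
  by (auto simp: dv_def right_diff_distrib intro!: bexI[of _ "_ - _"])
lemma dv_uminus: "dv n x \<Longrightarrow> dv n (- x)"
  by (auto simp: dv_def intro!: bexI[of _ "- _"])
lemma dv_multZ: "dv n x \<Longrightarrow> y \<in> Z2 \<Longrightarrow> dv n (x * y)"
  by (auto simp: dv_def mult.assoc intro!: bexI[of _ "_ * _"])
lemma dv_mult: "dv m x \<Longrightarrow> dv n y \<Longrightarrow> dv (m + n) (x * y)"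
  by (auto simp: dv_def power_add mult_ac intro!: bexI[of _ "_ * _"])
lemma dv_mono: "m \<le> n \<Longrightarrow> dv n x \<Longrightarrow> dv m x"
proof -
  assume "m \<le> n" "dv n x"
  then obtain y where "y \<in> Z2" "x = 2^n * y" by (auto simp: dv_def)
  moreover have "(2::q2)^n = 2^m * 2^(n-m)" using \<open>m \<le> n\<close> by (simp add: power_add[symmetric])
  ultimately show "dv m x" by (auto simp: dv_def mult.assoc intro!: bexI[of _ "2^(n-m) * y"])
qed
lemma dv_pow2: "y \<in> Z2 \<Longrightarrow> dv n (2^n * y)" by (auto simp: dv_def)

lemma emb_dv_iff: "dv n (emb F) \<longleftrightarrow> 2^n dvd S n F"
proof
  assume "dv n (emb F)"
  moreover have "dv n (2^n * emb (fps_shift n F))" by (rule dv_pow2) simp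
  ultimately have "dv n (emb F - 2^n * emb (fps_shift n F))" by (rule dv_diff)
  then have "dv n (of_int (S n F))" using emb_split[of F n] by simp
  then show "2^n dvd S n F" by (rule int_dv)
next
  assume "2^n dvd S n F"
  then have "dv n (of_int (S n F))" by (rule dv_intI)
  moreover have "dv n (2^n * emb (fps_shift n F))" by (rule dv_pow2) simp
  ultimately show "dv n (emb F)" using emb_split[of F n] by (simp add: dv_add)
qed

lemma kernel:
  assumes "\<And>n. 2^n dvd S n F" shows "emb F = 0"
proof -
  define k where "k n = S (Suc n) F div 2^(Suc n)" for n
  have kk: "S (Suc n) F = 2^Suc n * k n" for n using assms[of "Suc n"] unfolding k_def by simp
  define H where "H = Abs_fps (\<lambda>n. - k n)"
  have "(fps_X - 2) * H = F"
  proof (rule fps_ext)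
    fix n
    show "((fps_X - 2) * H) $ n = F $ n"
    proof (cases n)
      case 0
      have "S 1 F = F$0" by simp
      then show ?thesis using kk[of 0] 0 by (simp add: H_def algebra_simps fps_numeral_fps_const)
    next
      case (Suc m)
      have "S (Suc (Suc m)) F = S (Suc m) F + F$(Suc m) * 2^Suc m" by (rule S_Suc')
      then have "2^Suc (Suc m) * k (Suc m) = 2^Suc m * k m + F$(Suc m) * (2::int)^Suc m"
        using kk[of m] kk[of "Suc m"] by simp
      then have "2^Suc m * (2 * k (Suc m)) = 2^Suc m * (k m + F$(Suc m))" by (simp add: algebra_simps)
      then have "2 * k (Suc m) = k m + F$(Suc m)" by (simp only: mult_cancel_left) simp
      then show ?thesis using Suc by (simp add: H_def algebra_simps fps_numeral_fps_const)
    qed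
  qed
  then have "emb F = (2 - 2) * emb H" by (metis emb_diff emb_mult emb_X emb_of_int of_int_numeral fps_of_int)
  then show ?thesis by simp
qed

lemma dv_all_zero: "x \<in> Z2 \<Longrightarrow> (\<And>n. dv n x) \<Longrightarrow> x = 0"
  by (metis Z2_emb emb_dv_iff kernel)

lemma Z2_parity: assumes "x \<in> Z2" shows "dv 1 x \<or> dv 1 (x - 1)"
proof -
  obtain F where F: "x = emb F" using assms Z2_emb by auto
  have x: "x = of_int (F$0) + 2 * emb (fps_shift 1 F)" unfolding F by (rule emb_split1)
  define k where "k = F$0 div 2"
  define w where "w = of_int k + emb (fps_shift 1 F)"
  have wZ: "w \<in> Z2" unfolding w_def by simp
  show ?thesis
  proof (cases "even (F$0)")
    case True
    then have "F$0 = 2 * k" unfolding k_def by simp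
    then have "x = 2 * w" using x unfolding w_def by (simp add: algebra_simps)
    then have "dv 1 x" using wZ unfolding dv_def by auto
    then show ?thesis ..
  next
    case False
    then have "F$0 = 2 * k + 1" unfolding k_def by presburger
    then have "x - 1 = 2 * w" using x unfolding w_def by (simp add: algebra_simps)
    then have "dv 1 (x - 1)" using wZ unfolding dv_def by auto
    then show ?thesis ..
  qed
qed

lemma not_dv1_1: "\<not> dv 1 1"
proof
  assume "dv 1 1"
  then have "dv 1 (of_int 1)" by simp
  from int_dv[OF this] show False by simp
qed

lemma Z2_unit: assumes "x \<in> Z2" "\<not> dv 1 x" shows "\<exists>y\<in>Z2. x * y = 1"
proof -
  from Z2_parity[OF assms(1)] assms(2) have "dv 1 (x - 1)" by blast
  then obtain w where w: "w \<in> Z2" "x - 1 = 2 * w" by (auto simp: dv_def)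
  then obtain K where K: "w = emb K" using Z2_emb by auto
  define Y where "Y = Abs_fps (ycf K 0 1)"
  have "Y + fps_X * (Y * K + fps_const 0 * (Y * Y)) = 1" unfolding Y_def by (rule ycf_eq)
  then have "Y + fps_X * (Y * K) = 1" by simp
  then have "emb (Y + fps_X * (Y * K)) = emb 1" by simp
  then have "emb Y + 2 * (emb Y * emb K) = 1" by (simp only: emb_add emb_mult emb_X emb_1)
  then have "x * emb Y = 1" using w K by (simp add: algebra_simps)
  then show ?thesis by auto
qed

lemma hensel: assumes "e \<in> Z2" shows "\<exists>g. g * g = 1 + 8 * e"
proof -
  obtain E where E: "e = emb E" using assms Z2_emb by auto
  define Y where "Y = Abs_fps (ycf 0 1 E)"
  have "Y + fps_X * (Y * 0 + fps_const 1 * (Y * Y)) = E" unfolding Y_def by (rule ycf_eq)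
  then have "Y + fps_X * (Y * Y) = E" by simp
  then have "emb (Y + fps_X * (Y * Y)) = emb E" by simp
  then have "emb Y + 2 * (emb Y * emb Y) = e" using E by (simp only: emb_add emb_mult emb_X)
  moreover have "(1 + 4 * emb Y) * (1 + 4 * emb Y) = 1 + 8 * (emb Y + 2 * (emb Y * emb Y))"
    by (simp add: algebra_simps)
  ultimately have "(1 + 4 * emb Y) * (1 + 4 * emb Y) = 1 + 8 * e" by simp
  then show ?thesis by blast
qed

lemma Z2_val_aux: "x \<in> Z2 \<Longrightarrow> \<not> dv n x \<Longrightarrow> \<exists>m u. u \<in> Z2 \<and> \<not> dv 1 u \<and> x = 2^m * u"
proof (induction n arbitrary: x)
  case 0 then show ?case by (simp add: dv_zero_iff)
next
  case (Suc n)
  show ?case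
  proof (cases "dv 1 x")
    case True
    then obtain y where y: "y \<in> Z2" "x = 2 * y" by (auto simp: dv_def)
    have "\<not> dv n y"
    proof
      assume "dv n y"
      then obtain z where "z \<in> Z2" "y = 2^n * z" by (auto simp: dv_def)
      then have "dv (Suc n) x" using y by (auto simp: dv_def mult.assoc)
      then show False using Suc by simp
    qed
    from Suc.IH[OF y(1) this] obtain m u where "u \<in> Z2" "\<not> dv 1 u" "y = 2^m * u" by blast
    then show ?thesis using y by (intro exI[of _ "Suc m"] exI[of _ u]) (simp add: mult.assoc)
  next
    case False
    then show ?thesis using Suc by (intro exI[of _ 0] exI[of _ x]) simp
  qed
qed

lemma Z2_val: "x \<in> Z2 \<Longrightarrow> x \<noteq> 0 \<Longrightarrow> \<exists>m u. u \<in> Z2 \<and> \<not> dv 1 u \<and> x = 2^m * u"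
  using Z2_val_aux dv_all_zero by blast

lemma abs_q2_X_power: "abs_q2 (fls_X ^ k) = 2 ^ k"
proof (induction k)
  case 0 then show ?case by (simp add: one_q2.abs_eq)
next
  case (Suc k)
  have "abs_q2 (fls_X ^ Suc k) = abs_q2 fls_X * abs_q2 (fls_X ^ k)" by (simp add: times_q2.abs_eq)
  also have "abs_q2 fls_X = 2" using emb_X by (simp add: emb_def)
  finally show ?case using Suc by simp
qed

lemma scale_Z2: "\<exists>k. x * 2^k \<in> Z2"
proof (induction x rule: q2.abs_induct)
  case (1 f)
  define k where "k = nat (- fls_subdegree f)"
  have "fls_subdegree (fls_shift (- int k) f) \<ge> 0"
    by (rule fls_shift_nonneg_subdegree) (simp add: k_def)
  then have "abs_q2 (f * fls_X ^ k) \<in> Z2" unfolding Z2_def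
    by (simp add: fls_X_power_times_conv_shift)
  then have "abs_q2 f * 2^k \<in> Z2" by (simp add: times_q2.abs_eq[symmetric] abs_q2_X_power)
  then show ?case by blast
qed

lemma half_pow: "(2::q2)^k * half^k = 1"
  by (metis half_2 mult.commute power_mult_distrib power_one)

lemma q2_inverse_ex: fixes x :: q2 assumes "x \<noteq> 0" shows "\<exists>y. x * y = 1"
proof -
  obtain k where k: "x * 2^k \<in> Z2" using scale_Z2 by blast
  have "x * 2^k \<noteq> 0"
  proof
    assume "x * 2^k = 0"
    then have "x * 2^k * half^k = 0" by simp
    then show False using assms half_pow[of k] by (simp add: mult.assoc)
  qed
  from Z2_val[OF k this] obtain m u where mu: "u \<in> Z2" "\<not> dv 1 u" "x * 2^k = 2^m * u" by blast
  from Z2_unit[OF mu(1,2)] obtain v where v: "u * v = 1" by blast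
  have "x * (2^k * half^m * v) = (x * 2^k) * half^m * v" by (simp add: mult_ac)
  also have "\<dots> = (2^m * half^m) * (u * v)" unfolding mu(3) by (simp add: mult_ac)
  also have "\<dots> = 1" using v half_pow[of m] by simp
  finally show ?thesis by blast
qed

lemma q2_inv_mult: "(a::q2) \<noteq> 0 \<Longrightarrow> q2_inv a * a = 1"
  using q2_inverse_ex[of a] someI_ex[of "\<lambda>y. a * y = 1"]
  by (auto simp: q2_inv_def mult.commute)

instantiation q2 :: field
begin
definition inverse_q2 :: "q2 \<Rightarrow> q2" where "inverse_q2 x = (if x = 0 then 0 else q2_inv x)"
definition divide_q2 :: "q2 \<Rightarrow> q2 \<Rightarrow> q2" where "divide_q2 x y = x * inverse y"
instance by standard (auto simp: inverse_q2_def divide_q2_def q2_inv_mult)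
end

lemma q2_inv_eq: "x \<noteq> 0 \<Longrightarrow> q2_inv x = inverse x"
  by (simp add: inverse_q2_def)

lemma of_int_q2_eq0: assumes "(of_int m :: q2) = 0" shows "m = 0"
proof (rule ccontr)
  assume "m \<noteq> 0"
  have "dv (nat \<bar>m\<bar>) (of_int m)" using assms by simp
  then have "2 ^ nat \<bar>m\<bar> dvd m" by (rule int_dv)
  then have "\<bar>2 ^ nat \<bar>m\<bar>\<bar> \<le> \<bar>m\<bar>" by (rule dvd_imp_le_int[OF \<open>m \<noteq> 0\<close>])
  moreover have "\<bar>m\<bar> < 2 ^ nat \<bar>m\<bar>"
  proof -
    have "nat \<bar>m\<bar> < 2 ^ nat \<bar>m\<bar>" by (rule less_exp)
    then have "int (nat \<bar>m\<bar>) < int (2 ^ nat \<bar>m\<bar>)" by (simp only: of_nat_less_iff)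
    then show ?thesis by simp
  qed
  ultimately show False by simp
qed

instance q2 :: field_char_0
proof
  show "inj (of_nat :: nat \<Rightarrow> q2)"
  proof (rule injI)
    fix a b :: nat assume "(of_nat a :: q2) = of_nat b"
    then have "(of_int (int a - int b) :: q2) = 0" by simp
    then have "int a - int b = 0" by (rule of_int_q2_eq0)
    then show "a = b" by simp
  qed
qed

lemma unit_inv: assumes "u \<in> Z2" "\<not> dv 1 u" shows "inverse u \<in> Z2" "u \<noteq> 0"
proof -
  obtain y where y: "y \<in> Z2" "u * y = 1" using Z2_unit[OF assms] by blast
  then show "u \<noteq> 0" by auto
  then have "y = inverse u" using y(2) by (metis inverse_unique)
  then show "inverse u \<in> Z2" using y by simp
qed

lemma q2_val: assumes "(x::q2) \<noteq> 0" shows "\<exists>n k u. u \<in> Z2 \<and> \<not> dv 1 u \<and> x = u * 2^n / 2^k"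
proof -
  obtain k where k: "x * 2^k \<in> Z2" using scale_Z2 by blast
  have "x * 2^k \<noteq> 0" using assms by simp
  from Z2_val[OF k this] obtain m u where mu: "u \<in> Z2" "\<not> dv 1 u" "x * 2^k = 2^m * u" by blast
  then have "x = u * 2^m / 2^k" by (simp add: field_simps)
  then show ?thesis using mu by blast
qed

lemma unit_sq: assumes "u \<in> Z2" "\<not> dv 1 u" shows "\<not> dv 1 (u * u)"
proof
  assume d: "dv 1 (u * u)"
  from Z2_parity[OF assms(1)] assms(2) have "dv 1 (u - 1)" by blast
  then obtain w where w: "w \<in> Z2" "u - 1 = 2 * w" by (auto simp: dv_def)
  then have "u = 1 + 2 * w" by (simp add: algebra_simps)
  then have "u * u - 1 = 2 * (2 * w + 2 * w * w)" by (simp add: algebra_simps)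
  moreover have "dv 1 (2 * (2 * w + 2 * w * w))" using w(1) unfolding dv_def
    by (intro bexI[of _ "2 * w + 2 * w * w"]) simp_all
  ultimately have "dv 1 (u * u - (u * u - 1))" using d by (metis dv_diff)
  then show False using not_dv1_1 by simp
qed

lemma pow2_div_ge: "k \<le> n \<Longrightarrow> (2::q2)^n / 2^k = 2^(n-k)"
  by (simp add: power_diff)

lemma pow2_div_lt: "n \<le> k \<Longrightarrow> (2::q2)^n / 2^k = 1 / 2^(k-n)"
proof -
  assume "n \<le> k"
  then have "(2::q2)^k = 2^n * 2^(k-n)" by (simp add: power_add[symmetric])
  then show ?thesis by simp
qed

lemma sq_dv: assumes "dv (2*m) (s*s)" shows "dv m s"
proof (cases "s = 0")
  case True then show ?thesis by simp
next
  case False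
  obtain n k u where nku: "u \<in> Z2" "\<not> dv 1 u" "s = u * 2^n / 2^k" using q2_val[OF False] by blast
  show ?thesis
  proof (cases "k + m \<le> n")
    case True
    have "s = u * (2^n / 2^k)" using nku by simp
    also have "\<dots> = u * 2^(n-k)" using True by (simp add: pow2_div_ge)
    also have "(2::q2)^(n-k) = 2^m * 2^(n-k-m)"
    proof -
      have "n - k = m + (n - k - m)" using True by simp
      then show ?thesis by (metis power_add)
    qed
    finally have "s = 2^m * (u * 2^(n-k-m))" by simp
    then show ?thesis using nku(1) by (auto simp: dv_def)
  next
    case False
    obtain w where w: "w \<in> Z2" "s * s = 2^(2*m) * w" using assms by (auto simp: dv_def)
    have k0: "(2::q2)^k \<noteq> 0" by simp
    have "s * 2^k = u * 2^n" using nku(3) by (simp add: field_simps)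
    then have "(s * 2^k) * (s * 2^k) = (u * 2^n) * (u * 2^n)" by simp
    then have "s * s * (2^k * 2^k) = u * u * (2^n * 2^n)" by (simp add: mult_ac)
    then have h1: "u * u * (2^n * 2^n) = w * (2^(2*m) * (2^k * 2^k))" using w by (simp add: mult_ac)
    define j where "j = 2*m + 2*k - 2*n - 1"
    have e: "2*m + k + k = n + n + Suc j" using False unfolding j_def by simp
    have "(2::q2)^(2*m) * (2^k * 2^k) = 2^(2*m + k + k)" by (simp only: power_add mult.assoc)
    also have "\<dots> = 2^(n + n + Suc j)" using e by simp
    also have "\<dots> = (2^n * 2^n) * (2 * 2^j)" by (simp only: power_add power_Suc)
    finally have h2: "(2::q2)^(2*m) * (2^k * 2^k) = (2^n * 2^n) * (2 * 2^j)" .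
    have "u * u * (2^n * 2^n) = (2^n * 2^n) * (2 * (2^j * w))"
      unfolding h1 h2 by (simp add: mult_ac)
    then have "u * u = 2 * (2^j * w)" by (simp add: mult.commute)
    then have "dv 1 (u * u)" using w(1) by (auto simp: dv_def)
    then show ?thesis using unit_sq[OF nku(1,2)] by simp
  qed
qed

lemma val_split: "dv 2 y \<or> (y \<noteq> 0 \<and> 2 / y \<in> Z2)"
proof (cases "y = 0")
  case True then show ?thesis by simp
next
  case False
  have y0: "y \<noteq> 0" using False .
  obtain n k u where nku: "u \<in> Z2" "\<not> dv 1 u" "y = u * 2^n / 2^k" using q2_val[OF False] by blast
  show ?thesis
  proof (cases "k + 2 \<le> n")
    case True
    have "y = u * (2^n / 2^k)" using nku by simp
    also have "\<dots> = u * 2^(n-k)" using True by (simp add: pow2_div_ge)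
    also have "(2::q2)^(n-k) = 2^2 * 2^(n-k-2)"
    proof -
      have "n - k = 2 + (n - k - 2)" using True by simp
      then show ?thesis by (metis power_add)
    qed
    finally have "y = 2^2 * (u * 2^(n-k-2))" by simp
    then show ?thesis using nku(1) by (auto simp: dv_def)
  next
    case False
    have u0: "u \<noteq> 0" using unit_inv[OF nku(1,2)] by simp
    have "2 / y = inverse u * (2 * 2^k / 2^n)" using nku(3) u0 y0 by (simp add: field_simps)
    also have "(2::q2) * 2^k / 2^n = 2^(Suc k - n)" using False
      by (simp add: pow2_div_ge[symmetric])
    finally have "2 / y = inverse u * 2^(Suc k - n)" .
    then show ?thesis using y0 unit_inv[OF nku(1,2)] by simp
  qed
qed

lemma Z2_mod8: assumes "x \<in> Z2" shows "\<exists>c y. y \<in> Z2 \<and> x = of_int c + 8 * y"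
proof -
  obtain F where F: "x = emb F" using assms Z2_emb by auto
  have "x = of_int (S 3 F) + 2^3 * emb (fps_shift 3 F)" unfolding F by (rule emb_split)
  then show ?thesis by (intro exI[of _ "S 3 F"] exI[of _ "emb (fps_shift 3 F)"]) simp
qed

lemma odd_sq_int: "odd (x::int) \<Longrightarrow> \<exists>k. x^2 = 8*k + 1"
proof -
  assume "odd x"
  then obtain m where m: "x = 2*m + 1" using oddE by blast
  have "even (m * (m + 1))" by simp
  then obtain j where j: "m * (m + 1) = 2 * j" by blast
  have "x^2 = 4 * (m * (m + 1)) + 1" unfolding m by (simp add: power2_eq_square algebra_simps)
  then show ?thesis using j by (intro exI[of _ j]) simp
qed

lemma even_sq_int: "even (x::int) \<Longrightarrow> \<exists>k. x^2 = 4*k"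
proof -
  assume "even x"
  then obtain m where m: "x = 2*m" by blast
  then show ?thesis by (intro exI[of _ "m*m"]) (simp add: power2_eq_square)
qed

lemma sq_int: "\<exists>k. (x::int)^2 = 4*k \<or> x^2 = 8*k + 1"
  using odd_sq_int[of x] even_sq_int[of x] by blast

lemma no_mult_int: "0 < r \<Longrightarrow> r < (k::int) \<Longrightarrow> k * X = r \<Longrightarrow> False"
proof -
  assume "0 < r" "r < k" "k * X = r"
  then have "(k * X) mod k = r mod k" by simp
  then show False using \<open>0 < r\<close> \<open>r < k\<close> by simp
qed

lemma int_aniso: assumes "8 dvd ((a::int)^2 - 2*b^2 - 5*c^2 + 10*d^2)" shows "even a \<and> even c"
proof -
  obtain kb where kb: "b^2 = 4*kb \<or> b^2 = 8*kb + 1" using sq_int by blast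
  obtain kd where kd: "d^2 = 4*kd \<or> d^2 = 8*kd + 1" using sq_int by blast
  obtain q where q: "a^2 - 2*b^2 - 5*c^2 + 10*d^2 = 8 * q" using assms by blast
  show ?thesis
  proof (cases "even a")
    case ea: True
    show ?thesis
    proof (cases "even c")
      case True then show ?thesis using ea by simp
    next
      case False
      obtain ka where ka: "a^2 = 4*ka" using even_sq_int[OF ea] by blast
      obtain kc where kc: "c^2 = 8*kc + 1" using odd_sq_int[OF False] by blast
      have "2 * (2*ka - b^2 - 20*kc + 5*d^2 - 4*q - 2) = 1" using q ka kc by (smt (verit))
      then have False by (rule no_mult_int[of 1 2, rotated 2]) simp_all
      then show ?thesis ..
    qed
  next
    case oa: False
    obtain ka where ka: "a^2 = 8*ka + 1" using odd_sq_int[OF oa] by blast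
    show ?thesis
    proof (cases "even c")
      case True
      obtain kc where kc: "c^2 = 4*kc" using even_sq_int[OF True] by blast
      have "2 * (4*q - 4*ka + b^2 + 10*kc - 5*d^2) = 1" using q ka kc by (smt (verit))
      then have False by (rule no_mult_int[of 1 2, rotated 2]) simp_all
      then show ?thesis ..
    next
      case False
      obtain kc where kc: "c^2 = 8*kc + 1" using odd_sq_int[OF False] by blast
      from kb kd show ?thesis
      proof (elim disjE)
        assume "b^2 = 4*kb" "d^2 = 4*kd"
        then have "8 * (ka - kb - 5*kc + 5*kd - q) = 4" using q ka kc by (smt (verit))
        then have False by (rule no_mult_int[of 4 8, rotated 2]) simp_all
      then show ?thesis ..
      next
        assume "b^2 = 4*kb" "d^2 = 8*kd + 1"
        then have "8 * (ka - kb - 5*kc + 10*kd - q + 1) = 2" using q ka kc by (smt (verit))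
        then have False by (rule no_mult_int[of 2 8, rotated 2]) simp_all
      then show ?thesis ..
      next
        assume "b^2 = 8*kb + 1" "d^2 = 4*kd"
        then have "8 * (ka - 2*kb - 5*kc + 5*kd - q) = 6" using q ka kc by (smt (verit))
        then have False by (rule no_mult_int[of 6 8, rotated 2]) simp_all
      then show ?thesis ..
      next
        assume "b^2 = 8*kb + 1" "d^2 = 8*kd + 1"
        then have "8 * (ka - 2*kb - 5*kc + 10*kd - q + 1) = 4" using q ka kc by (smt (verit))
        then have False by (rule no_mult_int[of 4 8, rotated 2]) simp_all
      then show ?thesis ..
      qed
    qed
  qed
qed

lemma even_dv1: assumes "even c" "y \<in> Z2" shows "dv 1 (of_int c + 8 * y)"
proof -
  obtain c' where "c = 2 * c'" using assms(1) by blast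
  then have "of_int c + 8 * y = 2 * (of_int c' + 4 * y)" by (simp add: algebra_simps)
  then show ?thesis using assms(2) unfolding dv_def by (intro bexI[of _ "of_int c' + 4 * y"]) simp_all
qed

lemma aniso_step:
  assumes "a \<in> Z2" "b \<in> Z2" "c \<in> Z2" "d \<in> Z2" "a^2 - 2*b^2 - 5*c^2 + 10*d^2 = 0"
  shows "dv 1 a \<and> dv 1 c"
proof -
  obtain ca ya where a: "ya \<in> Z2" "a = of_int ca + 8 * ya" using Z2_mod8[OF assms(1)] by blast
  obtain cb yb where b: "yb \<in> Z2" "b = of_int cb + 8 * yb" using Z2_mod8[OF assms(2)] by blast
  obtain cc yc where c: "yc \<in> Z2" "c = of_int cc + 8 * yc" using Z2_mod8[OF assms(3)] by blast
  obtain cd yd where d: "yd \<in> Z2" "d = of_int cd + 8 * yd" using Z2_mod8[OF assms(4)] by blast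
  define W where "W = (2 * of_int ca * ya + 8 * ya^2) - 2 * (2 * of_int cb * yb + 8 * yb^2)
     - 5 * (2 * of_int cc * yc + 8 * yc^2) + 10 * (2 * of_int cd * yd + 8 * yd^2)"
  have WZ: "W \<in> Z2" unfolding W_def using a b c d by simp
  define cq where "cq = ca^2 - 2*cb^2 - 5*cc^2 + 10*cd^2"
  have eq1: "a^2 - 2*b^2 - 5*c^2 + 10*d^2 = of_int cq + 8 * W"
    unfolding W_def a(2) b(2) c(2) d(2) cq_def by (simp add: power2_eq_square algebra_simps)
  have h: "of_int cq + 8 * W = 0" by (metis eq1 assms(5))
  have "of_int cq = (of_int cq + 8 * W) + 2^3 * (- W)" by simp
  also have "\<dots> = 2^3 * (- W)" using h by simp
  finally have "dv 3 (of_int cq)" using WZ unfolding dv_def by auto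
  then have "8 dvd cq" using int_dv by fastforce
  then have "8 dvd (ca^2 - 2*cb^2 - 5*cc^2 + 10*cd^2)" unfolding cq_def .
  from int_aniso[OF this] have "even ca" "even cc" by auto
  then show ?thesis using even_dv1 a c by simp
qed

lemma aniso_Z2:
  "a \<in> Z2 \<Longrightarrow> b \<in> Z2 \<Longrightarrow> c \<in> Z2 \<Longrightarrow> d \<in> Z2 \<Longrightarrow> a^2 - 2*b^2 - 5*c^2 + 10*d^2 = 0
   \<Longrightarrow> dv n a \<and> dv n b \<and> dv n c \<and> dv n d"
proof (induction n arbitrary: a b c d)
  case 0 then show ?case by (simp add: dv_zero_iff)
next
  case (Suc n)
  from aniso_step[OF Suc.prems] have "dv 1 a" "dv 1 c" by auto
  then obtain a' c' where a': "a' \<in> Z2" "a = 2 * a'" and c': "c' \<in> Z2" "c = 2 * c'"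
    unfolding dv_def by auto
  have "-2 * (b^2 - 2*a'^2 - 5*d^2 + 10*c'^2) = a^2 - 2*b^2 - 5*c^2 + 10*d^2"
    unfolding a'(2) c'(2) by (simp add: power2_eq_square algebra_simps)
  then have "-2 * (b^2 - 2*a'^2 - 5*d^2 + 10*c'^2) = 0" using Suc.prems(5) by (metis)
  moreover have "(-2::q2) \<noteq> 0" by simp
  ultimately have "b^2 - 2*a'^2 - 5*d^2 + 10*c'^2 = 0" by (metis mult_eq_0_iff)
  from aniso_step[OF Suc.prems(2) a'(1) Suc.prems(4) c'(1) this] have "dv 1 b" "dv 1 d" by auto
  then obtain b' d' where b': "b' \<in> Z2" "b = 2 * b'" and d': "d' \<in> Z2" "d = 2 * d'"
    unfolding dv_def by auto
  have "4 * (a'^2 - 2*b'^2 - 5*c'^2 + 10*d'^2) = a^2 - 2*b^2 - 5*c^2 + 10*d^2"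
    unfolding a'(2) b'(2) c'(2) d'(2) by (simp add: power2_eq_square algebra_simps)
  then have "4 * (a'^2 - 2*b'^2 - 5*c'^2 + 10*d'^2) = 0" using Suc.prems(5) by (metis)
  moreover have "(4::q2) \<noteq> 0" by simp
  ultimately have "a'^2 - 2*b'^2 - 5*c'^2 + 10*d'^2 = 0" by (metis mult_eq_0_iff)
  from Suc.IH[OF a'(1) b'(1) c'(1) d'(1) this]
  have "dv n a'" "dv n b'" "dv n c'" "dv n d'" by auto
  then show ?case using a'(2) b'(2) c'(2) d'(2) unfolding dv_def by (auto simp: mult.assoc)
qed

lemma scale_Z2_more: "x * 2^k \<in> Z2 \<Longrightarrow> k \<le> K \<Longrightarrow> x * 2^K \<in> Z2"
proof -
  assume "x * 2^k \<in> Z2" "k \<le> K"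
  moreover have "(2::q2)^K = 2^k * 2^(K-k)" using \<open>k \<le> K\<close> by (metis le_add_diff_inverse power_add)
  ultimately show ?thesis by (metis Z2_mult Z2_numeral Z2_power mult.assoc)
qed

lemma aniso:
  fixes a b c d :: q2
  assumes "a^2 - 2*b^2 - 5*c^2 + 10*d^2 = 0"
  shows "a = 0 \<and> b = 0 \<and> c = 0 \<and> d = 0"
proof -
  obtain ka kb kc kd where k: "a * 2^ka \<in> Z2" "b * 2^kb \<in> Z2" "c * 2^kc \<in> Z2" "d * 2^kd \<in> Z2"
    using scale_Z2 by metis
  define K where "K = ka + kb + kc + kd"
  have Z: "a * 2^K \<in> Z2" "b * 2^K \<in> Z2" "c * 2^K \<in> Z2" "d * 2^K \<in> Z2"
    using k scale_Z2_more unfolding K_def by (metis le_add1 le_add2 add.assoc add.commute)+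
  have "(a*2^K)^2 - 2*(b*2^K)^2 - 5*(c*2^K)^2 + 10*(d*2^K)^2 = (a^2 - 2*b^2 - 5*c^2 + 10*d^2) * (2^K)^2"
    by (simp only: power_mult_distrib) (simp add: algebra_simps)
  then have Q: "(a*2^K)^2 - 2*(b*2^K)^2 - 5*(c*2^K)^2 + 10*(d*2^K)^2 = 0" using assms by simp
  have all: "\<And>n. dv n (a*2^K) \<and> dv n (b*2^K) \<and> dv n (c*2^K) \<and> dv n (d*2^K)"
    by (rule aniso_Z2[OF Z Q])
  have "a*2^K = 0" by (rule dv_all_zero[OF Z(1)]) (use all in blast)
  moreover have "b*2^K = 0" by (rule dv_all_zero[OF Z(2)]) (use all in blast)
  moreover have "c*2^K = 0" by (rule dv_all_zero[OF Z(3)]) (use all in blast)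
  moreover have "d*2^K = 0" by (rule dv_all_zero[OF Z(4)]) (use all in blast)
  ultimately show ?thesis by simp
qed

lemma idW:
  fixes x1 x2 x3 r1 r2 r3 p q N b nv :: q2
  assumes N0: "N \<noteq> 0" and Nd: "N = -2*x1^2 - 5*x2^2 + 10*x3^2"
      and bd: "b = -2*r1*x1 - 5*r2*x2 + 10*r3*x3"
      and nvd: "nv = -2*r1^2 - 5*r2^2 + 10*r3^2"
  shows "qnorm (Quat p ((q - b/N)*x1 + r1) ((q - b/N)*x2 + r2) ((q - b/N)*x3 + r3))
         = p^2 + N*q^2 - (b^2 - N*nv)/N"
proof -
  define c where "c = q - b/N"
  have q: "q = c + b/N" unfolding c_def by simp
  have "qnorm (Quat p (c*x1 + r1) (c*x2 + r2) (c*x3 + r3)) = p^2 + c^2 * N + 2*c*b + nv"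
    unfolding Nd bd nvd by (simp add: power2_eq_square algebra_simps)
  also have "\<dots> = p^2 + N*q^2 - (b^2 - N*nv)/N"
    unfolding q using N0 by (simp add: field_simps power2_eq_square)
  finally show ?thesis unfolding c_def .
qed

lemma idW0:
  fixes x1 x2 x3 r1 r2 r3 c N b nv :: q2
  assumes N0: "N \<noteq> 0" and Nd: "N = -2*x1^2 - 5*x2^2 + 10*x3^2"
      and bd: "b = -2*r1*x1 - 5*r2*x2 + 10*r3*x3"
      and nvd: "nv = -2*r1^2 - 5*r2^2 + 10*r3^2"
      and z: "c*x1 + r1 = 0" "c*x2 + r2 = 0" "c*x3 + r3 = 0"
  shows "(b^2 - N*nv)/N = 0"
proof -
  have r: "r1 = -c*x1" "r2 = -c*x2" "r3 = -c*x3" using z by (simp_all add: eq_neg_iff_add_eq_0 add.commute)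
  have "b = -c * N" unfolding bd Nd r by (simp add: power2_eq_square algebra_simps)
  moreover have "nv = c^2 * N" unfolding nvd Nd r by (simp add: power2_eq_square algebra_simps)
  ultimately show ?thesis by (simp add: power2_eq_square algebra_simps)
qed

lemma key_alg:
  fixes A B s r0 L0 lam :: q2
  assumes s: "s*s = (1 - A - B)^2 - 4*A*B"
      and L0: "L0 = (1 + (A - B) + s) / 2"
      and lam: "lam = 1 - 2*r0 + A - B"
  shows "L0 * lam = (r0 - L0)^2 + (A - r0^2)"
    and "B = (1 - L0) * ((1 - L0) + s)"
proof -
  have "4 * (L0 * lam - ((r0 - L0)^2 + (A - r0^2))) = (1 - A - B)^2 - 4*A*B - s*s"
    unfolding L0 lam by (simp add: field_simps power2_eq_square)
  then have "4 * (L0 * lam - ((r0 - L0)^2 + (A - r0^2))) = 0" using s by simp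
  moreover have "(4::q2) \<noteq> 0" by simp
  ultimately have "L0 * lam - ((r0 - L0)^2 + (A - r0^2)) = 0" by (metis mult_eq_0_iff)
  then show "L0 * lam = (r0 - L0)^2 + (A - r0^2)" by (metis eq_iff_diff_eq_0)
  have "4 * (B - (1 - L0) * ((1 - L0) + s)) = s*s - ((1 - A - B)^2 - 4*A*B)"
    unfolding L0 by (simp add: field_simps power2_eq_square)
  then have "4 * (B - (1 - L0) * ((1 - L0) + s)) = 0" using s by simp
  moreover have "(4::q2) \<noteq> 0" by simp
  ultimately have "B - (1 - L0) * ((1 - L0) + s) = 0" by (metis mult_eq_0_iff)
  then show "B = (1 - L0) * ((1 - L0) + s)" by (metis eq_iff_diff_eq_0)
qed

lemma idF1:
  fixes x1 x2 x3 r0 r1 r2 r3 :: q2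
  defines "N \<equiv> -2*x1^2 - 5*x2^2 + 10*x3^2"
      and "b \<equiv> -2*r1*x1 - 5*r2*x2 + 10*r3*x3"
      and "nv \<equiv> -2*r1^2 - 5*r2^2 + 10*r3^2"
  shows "qnorm (qsub (Quat 0 x1 x2 x3) (qmul (qmul (Quat r0 r1 r2 r3) (Quat 0 x1 x2 x3)) (qconj (Quat r0 r1 r2 r3)))) * N
     = (N - (N*r0^2 + b^2) - (b^2 - N*nv))^2 - 4 * (N*r0^2 + b^2) * (b^2 - N*nv)"
  unfolding N_def b_def nv_def by (simp add: power2_eq_square algebra_simps)

lemma dvI: "y \<in> Z2 \<Longrightarrow> x = 2^n * y \<Longrightarrow> dv n x" unfolding dv_def by blast

lemma no_star:
  assumes pure: "pure a1"
    and u: "u \<in> uminus ` Z2_sq \<union> (\<lambda>s. - 5 * s) ` Z2_sq"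
    and na: "qnorm a1 \<in> (\<lambda>s. - u * s) ` Q2_sq"
    and t: "3 \<le> t"
  shows "\<not> star_conditions a1 t r"
proof
  assume st: "star_conditions a1 t r"
  obtain x1 x2 x3 where a1: "a1 = Quat 0 x1 x2 x3" using pure by (cases a1) auto
  obtain r0 r1 r2 r3 where r: "r = Quat r0 r1 r2 r3" by (cases r)
  define N where "N = qnorm a1"
  have Nx: "N = -2*x1^2 - 5*x2^2 + 10*x3^2" unfolding N_def a1 by simp
  obtain w where w: "w \<in> Z2_units" "u = -(w*w) \<or> u = -5*(w*w)"
    using u unfolding Z2_sq_def by auto
  have w0: "w \<noteq> 0" using w(1) unfolding Z2_units_def by auto
  obtain y where y: "y \<noteq> 0" "N = - u * (y*y)" using na unfolding Q2_sq_def N_def by auto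
  define e where "e = w * y"
  have e0: "e \<noteq> 0" unfolding e_def using w0 y(1) by simp
  define d where "d = - N"
  have dcases: "d = -(e*e) \<or> d = -5*(e*e)" using w(2) y(2) unfolding d_def e_def
    by (auto simp: algebra_simps)
  have N0: "N \<noteq> 0" using dcases e0 unfolding d_def by auto
  define Nm where "Nm = {x. \<exists>p q. x = p^2 - d*q^2}"
  have Nm_sq: "g^2 \<in> Nm" for g unfolding Nm_def by (rule CollectI, rule exI[of _ g], rule exI[of _ 0]) simp
  have Nm_mult: "x * z \<in> Nm" if H: "x \<in> Nm" "z \<in> Nm" for x z
  proof -
    from H(1) obtain p q where x: "x = p^2 - d*q^2" unfolding Nm_def by blast
    from H(2) obtain p' q' where z: "z = p'^2 - d*q'^2" unfolding Nm_def by blast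
    have "x * z = (p*p' + d*q*q')^2 - d*(p*q' + q*p')^2"
      unfolding x z by (simp add: power2_eq_square algebra_simps)
    then show ?thesis unfolding Nm_def by blast
  qed
  have Nm_div: "x / z \<in> Nm" if H: "x \<in> Nm" "z \<in> Nm" "z \<noteq> 0" for x z
  proof -
    have "x / z = x * z * (inverse z)^2" using H(3) by (simp add: power2_eq_square field_simps)
    then show ?thesis using Nm_mult[OF Nm_mult[OF H(1,2)] Nm_sq] by simp
  qed
  have Nm_5: "5 * g^2 \<in> Nm" for g
    using dcases
  proof
    assume d: "d = -(e*e)"
    have "5 * g^2 = g^2 - d * (2*g/e)^2" unfolding d using e0 by (simp add: field_simps power2_eq_square)
    then show ?thesis unfolding Nm_def by blast
  next
    assume d: "d = -5*(e*e)"
    have "5 * g^2 = 0^2 - d * (g/e)^2" unfolding d using e0 by (simp add: field_simps power2_eq_square)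
    then show ?thesis unfolding Nm_def by blast
  qed
  have Nm_U: "x \<in> Nm" if H: "dv 2 (x - 1)" for x
  proof -
    obtain m where m: "m \<in> Z2" "x - 1 = 2^2 * m" using H unfolding dv_def by auto
    from Z2_parity[OF m(1)] show ?thesis
    proof
      assume "dv 1 m"
      then obtain m' where m': "m' \<in> Z2" "m = 2 * m'" unfolding dv_def by auto
      obtain g where "g * g = 1 + 8 * m'" using hensel[OF m'(1)] by blast
      then have "x = g^2" using m m' by (simp add: power2_eq_square algebra_simps)
      then show ?thesis using Nm_sq by simp
    next
      assume "dv 1 (m - 1)"
      then obtain m' where m': "m' \<in> Z2" "m - 1 = 2 * m'" unfolding dv_def by auto
      have n5: "\<not> dv 1 (5::q2)"
      proof
        assume "dv 1 (5::q2)"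
        then have "dv 1 (of_int 5 :: q2)" by simp
        from int_dv[OF this] show False by simp
      qed
      have i5: "inverse (5::q2) \<in> Z2" using unit_inv[OF _ n5] by simp
      have "m' * inverse 5 \<in> Z2" using m'(1) i5 by (rule Z2_mult)
      then obtain g where g: "g * g = 1 + 8 * (m' * inverse 5)" using hensel by blast
      have "x = 1 + 4 * (1 + 2 * m')" using m m' by (simp add: algebra_simps)
      also have "\<dots> = 5 * (1 + 8 * (m' * inverse 5))" by (simp add: field_simps)
      finally have "x = 5 * g^2" using g by (simp add: power2_eq_square)
      then show ?thesis using Nm_5 by simp
    qed
  qed
  have hil: "hilbert2 x d = 1" if H: "x \<in> Nm" for x
  proof -
    from H obtain p q where x: "x = p^2 - d*q^2" unfolding Nm_def by blast
    have "((1::q2), q, p) \<noteq> (0, 0, 0)" by simp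
    moreover have "x * 1^2 + d * q^2 = p^2" unfolding x by simp
    ultimately have "\<exists>X Y Z. (X, Y, Z) \<noteq> (0, 0, 0) \<and> x * X^2 + d * Y^2 = Z^2" by blast
    then show ?thesis unfolding hilbert2_def by simp
  qed
  define z where "z = qsub a1 (qmul (qmul r a1) (qconj r))"
  define lam where "lam = qnorm (qsub q_one r)"
  have st': "hilbert2 lam d = -1" "qnorm z * N \<in> Q2_sq"
     "qnorm z * q2_inv (qnorm (qscale (2 ^ t) a1)) \<in> Z2"
    using st unfolding star_conditions_def Let_def z_def lam_def d_def N_def by auto
  have lamNm: "lam \<notin> Nm" using hil st'(1) by force
  obtain Y where Y: "Y \<noteq> 0" "qnorm z * N = Y * Y" using st'(2) unfolding Q2_sq_def by auto
  define b where "b = -2*r1*x1 - 5*r2*x2 + 10*r3*x3"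
  define nv where "nv = -2*r1^2 - 5*r2^2 + 10*r3^2"
  define A where "A = (N*r0^2 + b^2) / N"
  define B where "B = (b^2 - N*nv) / N"
  have F1: "qnorm z * N = (N - (N*r0^2 + b^2) - (b^2 - N*nv))^2 - 4 * (N*r0^2 + b^2) * (b^2 - N*nv)"
    unfolding z_def a1 r Nx b_def nv_def by (rule idF1)
  define s where "s = Y / N"
  have NA: "N*r0^2 + b^2 = N*A" unfolding A_def using N0 by simp
  have NB: "b^2 - N*nv = N*B" unfolding B_def using N0 by simp
  have F1': "qnorm z * N = (N*N) * ((1 - A - B)^2 - 4*A*B)"
    unfolding F1 NA NB by (simp add: power2_eq_square algebra_simps)
  have ss: "s * s = (1 - A - B)^2 - 4*A*B"
  proof -
    have "s * s = qnorm z * N / (N * N)" unfolding s_def using Y(2) by simp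
    also have "\<dots> = (1 - A - B)^2 - 4*A*B" unfolding F1' using N0 by simp
    finally show ?thesis .
  qed
  have AB: "A - B = r0^2 + nv" unfolding A_def B_def using N0 by (simp add: field_simps)
  have lamAB: "lam = 1 - 2*r0 + A - B"
  proof -
    have "lam = 1 - 2*r0 + (r0^2 + nv)" unfolding lam_def r q_one_def nv_def by (simp add: power2_eq_square algebra_simps)
    then show ?thesis using AB by simp
  qed
  have Ar0: "A - r0^2 = - d * (b/N)^2"
    unfolding A_def d_def using N0 by (simp add: field_simps power2_eq_square)
  have s3: "dv 3 s"
  proof -
    have qs0: "qnorm (qscale (2 ^ t) a1) = (2^t)^2 * N"
      unfolding N_def a1 by (simp add: power_mult_distrib algebra_simps)
    have p2: "((2::q2)^t)^2 = 2^(2*t)" by (metis power_mult mult.commute)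
    have qs: "qnorm (qscale (2 ^ t) a1) = 2^(2*t) * N" using qs0 p2 by simp
    have nz: "(2::q2)^(2*t) * N \<noteq> 0" using N0 by simp
    have "q2_inv (qnorm (qscale (2 ^ t) a1)) = inverse (2^(2*t) * N)"
      unfolding qs using nz by (rule q2_inv_eq)
    then have h1: "qnorm z / (2^(2*t) * N) \<in> Z2" using st'(3) by (simp add: divide_inverse)
    have h2: "s * s = 2^(2*t) * (qnorm z / (2^(2*t) * N))"
    proof -
      have "s * s = (Y * Y) / (N * N)" unfolding s_def by simp
      also have "\<dots> = qnorm z * N / (N * N)" using Y(2) by simp
      also have "\<dots> = qnorm z / N" using N0 by simp
      also have "\<dots> = 2^(2*t) * (qnorm z / (2^(2*t) * N))" by simp
      finally show ?thesis .
    qed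
    have "dv (2*t) (s * s)" by (rule dvI[OF h1 h2])
    moreover have "2*3 \<le> 2*t" using t by simp
    ultimately have "dv (2*3) (s * s)" using dv_mono by blast
    then show ?thesis by (rule sq_dv)
  qed
  have Bz: "B = 0" if H: "B \<in> Nm"
  proof -
    from H obtain p q where pq: "B = p^2 - d*q^2" unfolding Nm_def by blast
    have "qnorm (Quat p ((q - b/N)*x1 + r1) ((q - b/N)*x2 + r2) ((q - b/N)*x3 + r3))
         = p^2 + N*q^2 - (b^2 - N*nv)/N" by (rule idW[OF N0 Nx b_def nv_def])
    also have "\<dots> = 0" using pq unfolding B_def d_def by simp
    finally have "p^2 - 2*((q - b/N)*x1 + r1)^2 - 5*((q - b/N)*x2 + r2)^2 + 10*((q - b/N)*x3 + r3)^2 = 0"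
      by simp
    from aniso[OF this] have "(q - b/N)*x1 + r1 = 0" "(q - b/N)*x2 + r2 = 0" "(q - b/N)*x3 + r3 = 0"
      by auto
    from idW0[OF N0 Nx b_def nv_def this] show "B = 0" unfolding B_def .
  qed
  have B0lam: "lam \<in> Nm" if H: "B = 0"
  proof -
    have "lam = (1 - r0)^2 + (A - r0^2)" unfolding lamAB H by (simp add: power2_eq_square algebra_simps)
    also have "\<dots> = (1 - r0)^2 - d * (b/N)^2" using Ar0 by simp
    finally show ?thesis unfolding Nm_def by blast
  qed
  have BNm: "B \<notin> Nm" using Bz B0lam lamNm by blast
  define L0 where "L0 = (1 + (A - B) + s) / 2"
  have K1: "L0 * lam = (r0 - L0)^2 + (A - r0^2)" and K2: "B = (1 - L0) * ((1 - L0) + s)"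
    using key_alg[OF ss L0_def lamAB] by auto
  from val_split[of "1 - L0"] show False
  proof
    assume dv2: "dv 2 (1 - L0)"
    then have "dv 2 (L0 - 1)" using dv_uminus by fastforce
    then have L0Nm: "L0 \<in> Nm" by (rule Nm_U)
    have L00: "L0 \<noteq> 0"
    proof
      assume "L0 = 0"
      then have "dv 1 1" using dv2 dv_mono[of 1 2] by simp
      then show False using not_dv1_1 by simp
    qed
    have "L0 * lam = (r0 - L0)^2 - d * (b/N)^2" unfolding K1 Ar0 by simp
    then have "L0 * lam \<in> Nm" unfolding Nm_def by blast
    then have "L0 * lam / L0 \<in> Nm" using Nm_div L0Nm L00 by blast
    then have "lam \<in> Nm" using L00 by simp
    then show False using lamNm by simp
  next
    assume yy: "1 - L0 \<noteq> 0 \<and> 2 / (1 - L0) \<in> Z2"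
    define yv where "yv = 1 - L0"
    have y0: "yv \<noteq> 0" and y2: "2 / yv \<in> Z2" using yy unfolding yv_def by auto
    obtain w' where w': "w' \<in> Z2" "s = 2^3 * w'" using s3 unfolding dv_def by auto
    have "s / yv = 2^2 * (w' * (2 / yv))" unfolding w' by (simp add: field_simps)
    moreover have "w' * (2 / yv) \<in> Z2" using w'(1) y2 by (rule Z2_mult)
    ultimately have "dv 2 (s / yv)" by (intro dvI) auto
    then have "(1 + s / yv) \<in> Nm" by (intro Nm_U) simp
    moreover have "B = yv^2 * (1 + s / yv)" unfolding K2 yv_def[symmetric] using y0
      by (simp add: field_simps power2_eq_square)
    ultimately have "B \<in> Nm" using Nm_mult Nm_sq by simp
    then show False using BNm by simp
  qed
qed

theorem proposition5p2:
  fixes a1 :: quat and u :: q2 and t :: nat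
  assumes "pure a1"
    and "u \<in> uminus ` Z2_sq \<union> (\<lambda>s. - 5 * s) ` Z2_sq"
    and "qnorm a1 \<in> (\<lambda>s. - u * s) ` Q2_sq"
    and "t \<in> {3, 4}"
  shows "(\<exists>r \<in> O_D. star_conditions a1 t r) \<longleftrightarrow>
         (\<exists>a b c d :: int.
             0 \<le> a \<and> a < 2 ^ (t + 3) \<and> 0 \<le> b \<and> b < 2 ^ (t + 3) \<and>
             0 \<le> c \<and> c < 2 ^ (t + 3) \<and> 0 \<le> d \<and> d < 2 ^ (t + 3) \<and>
             star_conditions a1 t (OD_elem (of_int a) (of_int b) (of_int c) (of_int d)))"
proof -
  have t3: "3 \<le> t" using assms(4) by auto
  have ns: "\<not> star_conditions a1 t r" for r by (rule no_star[OF assms(1-3) t3])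
  show ?thesis using ns by blast
qed

end
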